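(* Let $\mathsf{K}$ be a variety, $\mathbf{B}\in\mathsf{K}$, and $\mathbf{A}\leq\mathbf{B}$ full in $\mathsf{K}$. If $\phi$ is a congruence of $\mathbf{A}$ and there exists a congruence $\theta$ of $\mathbf{B}$ with $\theta\neq\mathrm{id}_B$ and $\theta{\upharpoonright}_A\subseteq\phi$, then $\phi=\mathrm{Cg}^{\mathbf{B}}(\phi){\upharpoonright}_A$.
   Context: $\mathrm{Cg}^{\mathbf{B}}(X)$ is the least congruence of $\mathbf{B}$ containing $X\subseteq B\times B$; $\theta{\upharpoonright}_A=\theta\cap(A\times A)$. $\mathbf{A}\leq\mathbf{B}$ is full in $\mathsf{K}$ if it is proper, almost total ($B=\mathrm{Sg}^{\mathbf{B}}(A\cup\{b\})$ for some $b\in B$), and every congruence $\theta\neq\mathrm{id}_B$ of $\mathbf{B}$ relates each $b\in B$ to some $a\in A$. *)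

theory Defs
  imports Main
begin

record ('a, 'f) alg =
  carrier :: "'a set"
  ops :: "'f \<Rightarrow> 'a list \<Rightarrow> 'a"

definition algebra :: "('f \<Rightarrow> nat) \<Rightarrow> ('a, 'f) alg \<Rightarrow> bool" where
  "algebra ar A \<longleftrightarrow>
     (\<forall>f xs. length xs = ar f \<and> set xs \<subseteq> carrier A \<longrightarrow> ops A f xs \<in> carrier A)"

definition subalgebra :: "('f \<Rightarrow> nat) \<Rightarrow> ('a, 'f) alg \<Rightarrow> ('a, 'f) alg \<Rightarrow> bool" where
  "subalgebra ar A B \<longleftrightarrow> algebra ar A \<and> algebra ar B \<and> carrier A \<subseteq> carrier B \<and>
     (\<forall>f xs. length xs = ar f \<and> set xs \<subseteq> carrier A \<longrightarrow> ops A f xs = ops B f xs)"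

definition congruence :: "('f \<Rightarrow> nat) \<Rightarrow> ('a, 'f) alg \<Rightarrow> 'a rel \<Rightarrow> bool" where
  "congruence ar B \<theta> \<longleftrightarrow> equiv (carrier B) \<theta> \<and>
     (\<forall>f xs ys. length xs = ar f \<and> length ys = ar f \<and> list_all2 (\<lambda>x y. (x, y) \<in> \<theta>) xs ys
        \<longrightarrow> (ops B f xs, ops B f ys) \<in> \<theta>)"

definition Sg :: "('f \<Rightarrow> nat) \<Rightarrow> ('a, 'f) alg \<Rightarrow> 'a set \<Rightarrow> 'a set" where
  "Sg ar B X = \<Inter>{S. X \<subseteq> S \<and> S \<subseteq> carrier B \<and>
     (\<forall>f xs. length xs = ar f \<and> set xs \<subseteq> S \<longrightarrow> ops B f xs \<in> S)}"

definition Cg :: "('f \<Rightarrow> nat) \<Rightarrow> ('a, 'f) alg \<Rightarrow> 'a rel \<Rightarrow> 'a rel" where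
  "Cg ar B X = \<Inter>{\<theta>. congruence ar B \<theta> \<and> X \<subseteq> \<theta>}"

definition restr :: "'a rel \<Rightarrow> 'a set \<Rightarrow> 'a rel" where
  "restr \<theta> A = \<theta> \<inter> (A \<times> A)"

text \<open>Terms, evaluation, and varieties as equational classes (Birkhoff).\<close>
datatype ('f, 'v) trm = Var 'v | App 'f "('f, 'v) trm list"

fun wf_trm :: "('f \<Rightarrow> nat) \<Rightarrow> ('f, 'v) trm \<Rightarrow> bool" where
  "wf_trm ar (Var v) = True"
| "wf_trm ar (App f ts) = (length ts = ar f \<and> (\<forall>t\<in>set ts. wf_trm ar t))"

fun eval :: "('a, 'f) alg \<Rightarrow> ('v \<Rightarrow> 'a) \<Rightarrow> ('f, 'v) trm \<Rightarrow> 'a" where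
  "eval B \<sigma> (Var v) = \<sigma> v"
| "eval B \<sigma> (App f ts) = ops B f (map (eval B \<sigma>) ts)"

definition variety :: "('f \<Rightarrow> nat) \<Rightarrow> ('a, 'f) alg set \<Rightarrow> bool" where
  "variety ar K \<longleftrightarrow> (\<exists>E :: (('f, nat) trm \<times> ('f, nat) trm) set.
     (\<forall>(s, t)\<in>E. wf_trm ar s \<and> wf_trm ar t) \<and>
     K = {B. algebra ar B \<and> (\<forall>(s, t)\<in>E. \<forall>\<sigma>. (\<forall>v. \<sigma> v \<in> carrier B) \<longrightarrow> eval B \<sigma> s = eval B \<sigma> t)})"

definition full_in :: "('f \<Rightarrow> nat) \<Rightarrow> ('a, 'f) alg set \<Rightarrow> ('a, 'f) alg \<Rightarrow> ('a, 'f) alg \<Rightarrow> bool" where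
  "full_in ar K A B \<longleftrightarrow> A \<in> K \<and> B \<in> K \<and> subalgebra ar A B \<and>
     carrier A \<subset> carrier B \<and>
     (\<exists>b\<in>carrier B. carrier B = Sg ar B (carrier A \<union> {b})) \<and>
     (\<forall>\<theta>. congruence ar B \<theta> \<and> \<theta> \<noteq> Id_on (carrier B) \<longrightarrow>
        (\<forall>b\<in>carrier B. \<exists>a\<in>carrier A. (b, a) \<in> \<theta>))"

end

theory Submission
  imports Defs
begin

lemma la2_split:
  "list_all2 (\<lambda>x y. \<exists>a a'. P x a \<and> Q a a' \<and> R a' y) xs ys \<Longrightarrow>
   \<exists>as as'. list_all2 P xs as \<and> list_all2 Q as as' \<and> list_all2 R as' ys"
proof (induction rule: list_all2_induct)
  case Nil then show ?case by auto
next
  case (Cons x xs y ys)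
  then obtain as as' a a' where "list_all2 P xs as" "list_all2 Q as as'" "list_all2 R as' ys"
    "P x a" "Q a a'" "R a' y" by blast
  then show ?case by (intro exI[of _ "a#as"] exI[of _ "a'#as'"]) auto
qed

lemma la2_len: "list_all2 P xs ys \<Longrightarrow> length xs = length ys"
  by (simp add: list_all2_lengthD)

lemma la2_set: "list_all2 (\<lambda>x y. (x,y) \<in> S \<times> T) xs ys \<Longrightarrow> set xs \<subseteq> S \<and> set ys \<subseteq> T"
  by (induction rule: list_all2_induct) auto

theorem mainTheorem14:
  fixes ar :: "'f \<Rightarrow> nat" and K :: "('a, 'f) alg set"
    and A B :: "('a, 'f) alg" and \<phi> \<theta> :: "'a rel"
  assumes "variety ar K" and "B \<in> K" and "full_in ar K A B"
    and "congruence ar A \<phi>"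
    and "congruence ar B \<theta>" and "\<theta> \<noteq> Id_on (carrier B)"
    and "restr \<theta> (carrier A) \<subseteq> \<phi>"
  shows "\<phi> = restr (Cg ar B \<phi>) (carrier A)"
proof -
  have sub: "subalgebra ar A B" and AB: "carrier A \<subseteq> carrier B"
    and rep: "\<And>b. b \<in> carrier B \<Longrightarrow> \<exists>a\<in>carrier A. (b, a) \<in> \<theta>"
    using assms(3,5,6) unfolding full_in_def by auto
  have eqA: "equiv (carrier A) \<phi>" and cA: "\<And>f xs ys. length xs = ar f \<Longrightarrow> length ys = ar f \<Longrightarrow>
      list_all2 (\<lambda>x y. (x, y) \<in> \<phi>) xs ys \<Longrightarrow> (ops A f xs, ops A f ys) \<in> \<phi>"
    using assms(4) unfolding congruence_def by auto
  have eqB: "equiv (carrier B) \<theta>" and cB: "\<And>f xs ys. length xs = ar f \<Longrightarrow> length ys = ar f \<Longrightarrow>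
      list_all2 (\<lambda>x y. (x, y) \<in> \<theta>) xs ys \<Longrightarrow> (ops B f xs, ops B f ys) \<in> \<theta>"
    using assms(5) unfolding congruence_def by auto
  have algA: "algebra ar A" and opsAB: "\<And>f xs. length xs = ar f \<Longrightarrow> set xs \<subseteq> carrier A \<Longrightarrow> ops A f xs = ops B f xs"
    using sub unfolding subalgebra_def by auto
  have phiA: "\<phi> \<subseteq> carrier A \<times> carrier A" using eqA by (simp add: equiv_def)
  have thB: "\<theta> \<subseteq> carrier B \<times> carrier B" using eqB by (simp add: equiv_def)
  have thsym: "\<And>x y. (x,y) \<in> \<theta> \<Longrightarrow> (y,x) \<in> \<theta>" using eqB by (meson equiv_def symD)
  have thtr: "\<And>x y z. (x,y) \<in> \<theta> \<Longrightarrow> (y,z) \<in> \<theta> \<Longrightarrow> (x,z) \<in> \<theta>" using eqB by (meson equiv_def transD)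
  have phsym: "\<And>x y. (x,y) \<in> \<phi> \<Longrightarrow> (y,x) \<in> \<phi>" using eqA by (meson equiv_def symD)
  have phtr: "\<And>x y z. (x,y) \<in> \<phi> \<Longrightarrow> (y,z) \<in> \<phi> \<Longrightarrow> (x,z) \<in> \<phi>" using eqA by (meson equiv_def transD)
  have phrefl: "\<And>x. x \<in> carrier A \<Longrightarrow> (x,x) \<in> \<phi>" using eqA by (meson equiv_def refl_onD)
  have thphi: "\<And>x y. (x,y) \<in> \<theta> \<Longrightarrow> x \<in> carrier A \<Longrightarrow> y \<in> carrier A \<Longrightarrow> (x,y) \<in> \<phi>"
    using assms(7) unfolding restr_def by auto
  define \<psi> where "\<psi> = {(x,y). \<exists>a a'. (x,a) \<in> \<theta> \<and> (a,a') \<in> \<phi> \<and> (a',y) \<in> \<theta>}"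
  have psiA: "restr \<psi> (carrier A) \<subseteq> \<phi>"
  proof
    fix p assume "p \<in> restr \<psi> (carrier A)"
    then obtain x y a a' where p: "p = (x,y)" "x \<in> carrier A" "y \<in> carrier A"
      "(x,a) \<in> \<theta>" "(a,a') \<in> \<phi>" "(a',y) \<in> \<theta>" unfolding restr_def \<psi>_def by auto
    have "a \<in> carrier A" "a' \<in> carrier A" using p phiA by auto
    then have "(x,a) \<in> \<phi>" "(a',y) \<in> \<phi>" using p thphi by auto
    then show "p \<in> \<phi>" using p phtr by blast
  qed
  have cong: "congruence ar B \<psi>"
    unfolding congruence_def
  proof (intro conjI allI impI)
    show "equiv (carrier B) \<psi>"
    proof (rule equivI)
      show "\<psi> \<subseteq> carrier B \<times> carrier B" unfolding \<psi>_def using thB by blast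
      show "refl_on (carrier B) \<psi>"
      proof (rule refl_onI)
        fix b assume "b \<in> carrier B"
        then obtain a where "a \<in> carrier A" "(b,a) \<in> \<theta>" using rep by blast
        then show "(b,b) \<in> \<psi>" unfolding \<psi>_def using phrefl thsym by blast
      qed
      show "sym \<psi>" unfolding \<psi>_def sym_def using thsym phsym by blast
      show "trans \<psi>"
      proof (rule transI)
        fix x y z assume "(x,y) \<in> \<psi>" "(y,z) \<in> \<psi>"
        then obtain a1 a2 a3 a4 where h: "(x,a1) \<in> \<theta>" "(a1,a2) \<in> \<phi>" "(a2,y) \<in> \<theta>"
          "(y,a3) \<in> \<theta>" "(a3,a4) \<in> \<phi>" "(a4,z) \<in> \<theta>" unfolding \<psi>_def by auto
        have "a2 \<in> carrier A" "a3 \<in> carrier A" using h phiA by auto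
        moreover have "(a2,a3) \<in> \<theta>" using h thtr by blast
        ultimately have "(a2,a3) \<in> \<phi>" using thphi by blast
        then have "(a1,a4) \<in> \<phi>" using h phtr by blast
        then show "(x,z) \<in> \<psi>" unfolding \<psi>_def using h by blast
      qed
    qed
  next
    fix f xs ys
    assume H: "length xs = ar f \<and> length ys = ar f \<and> list_all2 (\<lambda>x y. (x, y) \<in> \<psi>) xs ys"
    then have "list_all2 (\<lambda>x y. \<exists>a a'. (x,a) \<in> \<theta> \<and> (a,a') \<in> \<phi> \<and> (a',y) \<in> \<theta>) xs ys"
      unfolding \<psi>_def by simp
    then obtain as as' where L: "list_all2 (\<lambda>x y. (x,y) \<in> \<theta>) xs as"
      "list_all2 (\<lambda>x y. (x,y) \<in> \<phi>) as as'" "list_all2 (\<lambda>x y. (x,y) \<in> \<theta>) as' ys"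
      using la2_split[where P="\<lambda>x y. (x,y) \<in> \<theta>" and Q="\<lambda>x y. (x,y) \<in> \<phi>" and R="\<lambda>x y. (x,y) \<in> \<theta>"]
      by blast
    have len: "length as = ar f" "length as' = ar f" using H L la2_len by metis+
    have "list_all2 (\<lambda>x y. (x,y) \<in> carrier A \<times> carrier A) as as'"
      by (rule list_all2_mono[OF L(2)]) (use phiA in blast)
    then have sets: "set as \<subseteq> carrier A" "set as' \<subseteq> carrier A" using la2_set by blast+
    have 1: "(ops B f xs, ops B f as) \<in> \<theta>" using cB H L len by blast
    have "(ops A f as, ops A f as') \<in> \<phi>" using cA L len by blast
    then have 2: "(ops B f as, ops B f as') \<in> \<phi>" using opsAB len sets by simp
    have 3: "(ops B f as', ops B f ys) \<in> \<theta>" using cB H L len by blast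
    show "(ops B f xs, ops B f ys) \<in> \<psi>" unfolding \<psi>_def using 1 2 3 by blast
  qed
  have phipsi: "\<phi> \<subseteq> \<psi>"
  proof
    fix p assume "p \<in> \<phi>"
    then obtain x y where p: "p = (x,y)" "(x,y) \<in> \<phi>" "x \<in> carrier A" "y \<in> carrier A" using phiA by auto
    then have "(x,x) \<in> \<theta>" "(y,y) \<in> \<theta>" using AB eqB by (meson equiv_def refl_onD subsetD)+
    then show "p \<in> \<psi>" unfolding \<psi>_def using p by blast
  qed
  have "Cg ar B \<phi> \<subseteq> \<psi>" unfolding Cg_def using cong phipsi by blast
  then have le: "restr (Cg ar B \<phi>) (carrier A) \<subseteq> \<phi>" using psiA unfolding restr_def by blast
  have "\<phi> \<subseteq> Cg ar B \<phi>" unfolding Cg_def by blast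
  then have "\<phi> \<subseteq> restr (Cg ar B \<phi>) (carrier A)" using phiA unfolding restr_def by blast
  then show ?thesis using le by blast
qed

end
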